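(* Let $\psi_1,\psi_2:(0,1]\to(0,\infty)$ each satisfy $\psi_i(1)=1$ and $\lim_{r\to0+}\psi_i(r)=0$, with $I_{\psi_1},I_{\psi_2}\subset(0,1)\cup(1,2)\cup(2,3)$ and $M_{\psi_1}<m_{\psi_2}$. Then for every $0<\varepsilon<1$ there exists $C=C(d,\psi_1,\psi_2,\varepsilon)>0$ such that for all $f\in C^{\psi_2}(\mathbb{R}^d)$, $$\|f\|_{C^{\psi_1}}\le C\|f\|_{C^0}+\varepsilon\|f\|_{C^{\psi_2}}.$$
   Context: A function $g:(0,1]\to(0,\infty)$ is almost increasing if there is $c\in(0,1]$ with $c\,g(r)\le g(R)$ for $0<r\le R\le1$, almost decreasing if there is $C\ge1$ with $g(R)\le Cg(r)$ for $0<r\le R\le1$. $M_g=\inf\{\alpha: g(r)/r^\alpha\text{ almost decreasing on }(0,1]\}$, $m_g=\sup\{\alpha: g(r)/r^\alpha\text{ almost increasing on }(0,1]\}$, $I_g=[m_g,M_g]$. $\|f\|_{C^0}=\sup|f|$; $\|D^jf\|_{C^0}=\max_{|\gamma|=j}\|D^\gamma f\|_{C^0}$. For $j\in\mathbb{N}_0$, $[f]_{C^{-j;g}}=\sup_{x}\sup_{0<|h|\le1}\frac{|f(x+h)-f(x)|}{g(|h|)|h|^{-j}}$, $[D^kf]_{C^{-k;g}}=\max_{|\gamma|=k}[D^\gamma f]_{C^{-k;g}}$. If $m_g\in(k,k+1]$, $k\in\mathbb{N}_0$, $C^g(\mathbb{R}^d)$ is the set of continuous $f$ with all $D^\gamma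 f$, $|\gamma|\le k$, bounded continuous and $[D^\gamma f]_{C^{-k;g}}<\infty$ for $|\gamma|=k$, with norm $\|f\|_{C^g}=\sum_{j=0}^k\|D^jf\|_{C^0}+[D^kf]_{C^{-k;g}}$. *)

theory Defs
  imports "HOL-Analysis.Analysis"
begin

definition almost_increasing :: "(real \<Rightarrow> real) \<Rightarrow> bool" where
  "almost_increasing g \<longleftrightarrow>
     (\<exists>c. 0 < c \<and> c \<le> 1 \<and> (\<forall>r R. 0 < r \<and> r \<le> R \<and> R \<le> 1 \<longrightarrow> c * g r \<le> g R))"

definition almost_decreasing :: "(real \<Rightarrow> real) \<Rightarrow> bool" where
  "almost_decreasing g \<longleftrightarrow>
     (\<exists>C. 1 \<le> C \<and> (\<forall>r R. 0 < r \<and> r \<le> R \<and> R \<le> 1 \<longrightarrow> g R \<le> C * g r))"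

text \<open>Upper and lower indices, valued in the extended reals (inf of empty set = +infinity).\<close>
definition upper_index :: "(real \<Rightarrow> real) \<Rightarrow> ereal" where
  "upper_index g = Inf (ereal ` {\<alpha>. almost_decreasing (\<lambda>r. g r / r powr \<alpha>)})"

definition lower_index :: "(real \<Rightarrow> real) \<Rightarrow> ereal" where
  "lower_index g = Sup (ereal ` {\<alpha>. almost_increasing (\<lambda>r. g r / r powr \<alpha>)})"

definition index_interval :: "(real \<Rightarrow> real) \<Rightarrow> real set" where
  "index_interval g = {x. lower_index g \<le> ereal x \<and> ereal x \<le> upper_index g}"

definition partial_dir :: "'a::real_normed_vector \<Rightarrow> ('a \<Rightarrow> real) \<Rightarrow> 'a \<Rightarrow> real" where
  "partial_dir i f x = deriv (\<lambda>t. f (x + t *\<^sub>R i)) 0"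

fun dpart :: "'a::real_normed_vector list \<Rightarrow> ('a \<Rightarrow> real) \<Rightarrow> 'a \<Rightarrow> real" where
  "dpart [] f = f"
| "dpart (i # is) f = partial_dir i (dpart is f)"

definition multi_idx :: "nat \<Rightarrow> (real^'n) list set" where
  "multi_idx j = {is. set is \<subseteq> Basis \<and> length is = j}"

definition sup0 :: "(real^'n \<Rightarrow> real) \<Rightarrow> real" where
  "sup0 f = (SUP x. \<bar>f x\<bar>)"

definition normD :: "nat \<Rightarrow> (real^'n \<Rightarrow> real) \<Rightarrow> real" where
  "normD j f = (SUP is \<in> multi_idx j. sup0 (dpart is f))"

definition holder_quot :: "nat \<Rightarrow> (real \<Rightarrow> real) \<Rightarrow> (real^'n \<Rightarrow> real) \<Rightarrow> real set" where
  "holder_quot j g f = {\<bar>f (x + h) - f x\<bar> / (g (norm h) * norm h powr (- real j)) | x h.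
                         0 < norm h \<and> norm h \<le> 1}"

definition holder_semi :: "nat \<Rightarrow> (real \<Rightarrow> real) \<Rightarrow> (real^'n \<Rightarrow> real) \<Rightarrow> real" where
  "holder_semi j g f = Sup (holder_quot j g f)"

definition holder_semiD :: "nat \<Rightarrow> (real \<Rightarrow> real) \<Rightarrow> (real^'n \<Rightarrow> real) \<Rightarrow> real" where
  "holder_semiD k g f = (SUP is \<in> multi_idx k. holder_semi k g (dpart is f))"

text \<open>The integer k with m_g in (k, k+1] (meaningful when m_g is a positive real).\<close>
definition horder :: "(real \<Rightarrow> real) \<Rightarrow> nat" where
  "horder g = nat (\<lceil>real_of_ereal (lower_index g)\<rceil> - 1)"

definition in_Cg :: "(real \<Rightarrow> real) \<Rightarrow> (real^'n \<Rightarrow> real) \<Rightarrow> bool" where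
  "in_Cg g f \<longleftrightarrow>
     (let k = horder g in
       (\<forall>is \<in> {is. set is \<subseteq> Basis \<and> length is < k}. \<forall>i \<in> Basis. \<forall>x.
           (\<lambda>t. dpart is f (x + t *\<^sub>R i)) field_differentiable (at (0::real))) \<and>
       (\<forall>is \<in> {is. set is \<subseteq> Basis \<and> length is \<le> k}.
           continuous_on UNIV (dpart is f) \<and> bounded (range (dpart is f))) \<and>
       (\<forall>is \<in> multi_idx k. bdd_above (holder_quot k g (dpart is f))))"

definition Cg_norm :: "(real \<Rightarrow> real) \<Rightarrow> (real^'n \<Rightarrow> real) \<Rightarrow> real" where
  "Cg_norm g f = (\<Sum>j\<le>horder g. normD j f) + holder_semiD (horder g) g f"

end

theory Submission
  imports Defs
begin

lemma multi_finite: "finite (multi_idx j :: (real^'n) list set)"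
  unfolding multi_idx_def by (rule finite_lists_length_eq) simp

lemma multi_ne: "multi_idx j \<noteq> ({} :: (real^'n) list set)"
proof -
  obtain b :: "real^'n" where b: "b \<in> Basis" using nonempty_Basis by blast
  have "replicate j b \<in> multi_idx j" using b unfolding multi_idx_def by auto
  then show ?thesis by blast
qed

lemma multi_Cons: "e \<in> Basis \<Longrightarrow> is \<in> multi_idx j \<Longrightarrow> e # is \<in> multi_idx (Suc j)"
  unfolding multi_idx_def by auto

lemma multi_Suc: "is \<in> multi_idx (Suc j) \<Longrightarrow> \<exists>e is'. is = e # is' \<and> e \<in> Basis \<and> is' \<in> multi_idx j"
  unfolding multi_idx_def by (cases "is") auto

lemma multi_0: "multi_idx 0 = {[]}"
  unfolding multi_idx_def by auto

lemma sup0_ge: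
  fixes g :: "real^'n \<Rightarrow> real"
  assumes "bounded (range g)" shows "\<bar>g y\<bar> \<le> sup0 g"
proof -
  obtain a where a: "\<forall>x\<in>range g. norm x \<le> a" using assms bounded_iff by blast
  have "bdd_above (range (\<lambda>x. \<bar>g x\<bar>))" using a by (auto intro!: bdd_aboveI2[where M=a])
  then show ?thesis unfolding sup0_def by (rule cSUP_upper[OF UNIV_I])
qed

lemma sup0_le:
  fixes g :: "real^'n \<Rightarrow> real"
  assumes "\<And>y. \<bar>g y\<bar> \<le> B" shows "sup0 g \<le> B"
  unfolding sup0_def by (rule cSUP_least) (auto intro: assms)

lemma normD_ge:
  fixes f :: "real^'n \<Rightarrow> real"
  assumes "is \<in> multi_idx j" shows "sup0 (dpart is f) \<le> normD j f"
  unfolding normD_def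
  by (rule cSUP_upper[OF assms]) (intro bdd_above_finite finite_imageI multi_finite)

lemma normD_le:
  fixes f :: "real^'n \<Rightarrow> real"
  assumes "\<And>is. is \<in> multi_idx j \<Longrightarrow> sup0 (dpart is f) \<le> B" shows "normD j f \<le> B"
  unfolding normD_def by (rule cSUP_least[OF multi_ne assms])

lemma normD_0: "normD 0 f = sup0 (f :: real^'n \<Rightarrow> real)"
  unfolding normD_def multi_0 by simp

lemma pt_le_normD:
  fixes f :: "real^'n \<Rightarrow> real"
  assumes "is \<in> multi_idx j" "bounded (range (dpart is f))"
  shows "\<bar>dpart is f y\<bar> \<le> normD j f"
  using order_trans[OF sup0_ge[OF assms(2)] normD_ge[OF assms(1)]] .

lemma quot_ne: "holder_quot j g (f :: real^'n \<Rightarrow> real) \<noteq> {}"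
proof -
  obtain b :: "real^'n" where b: "b \<in> Basis" using nonempty_Basis by blast
  then have "norm b = 1" by simp
  then have "\<bar>f (0 + b) - f 0\<bar> / (g (norm b) * norm b powr (- real j)) \<in> holder_quot j g f"
    unfolding holder_quot_def by fastforce
  then show ?thesis by blast
qed

lemma hq_le:
  fixes f :: "real^'n \<Rightarrow> real"
  assumes "bdd_above (holder_quot j g f)" "0 < norm h" "norm h \<le> 1"
  shows "\<bar>f (x + h) - f x\<bar> / (g (norm h) * norm h powr (- real j)) \<le> holder_semi j g f"
  unfolding holder_semi_def
  by (rule cSup_upper[OF _ assms(1)]) (use assms in \<open>auto simp: holder_quot_def\<close>)

lemma hs_le:
  fixes f :: "real^'n \<Rightarrow> real"
  assumes "\<And>x h. 0 < norm h \<Longrightarrow> norm h \<le> 1 \<Longrightarrow>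
     \<bar>f (x + h) - f x\<bar> / (g (norm h) * norm h powr (- real j)) \<le> B"
  shows "holder_semi j g f \<le> B"
  unfolding holder_semi_def
  by (rule cSup_least[OF quot_ne]) (auto simp: holder_quot_def intro: assms)

lemma hsD_ge:
  fixes f :: "real^'n \<Rightarrow> real"
  assumes "is \<in> multi_idx k" shows "holder_semi k g (dpart is f) \<le> holder_semiD k g f"
  unfolding holder_semiD_def
  by (rule cSUP_upper[OF assms]) (intro bdd_above_finite finite_imageI multi_finite)

lemma hsD_le:
  fixes f :: "real^'n \<Rightarrow> real"
  assumes "\<And>is. is \<in> multi_idx k \<Longrightarrow> holder_semi k g (dpart is f) \<le> B" shows "holder_semiD k g f \<le> B"
  unfolding holder_semiD_def by (rule cSUP_least[OF multi_ne assms])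

lemma in_Cg_D:
  fixes f :: "real^'n \<Rightarrow> real"
  assumes "in_Cg g f"
  shows "\<And>is i x. set is \<subseteq> Basis \<Longrightarrow> length is < horder g \<Longrightarrow> i \<in> Basis \<Longrightarrow>
           (\<lambda>t. dpart is f (x + t *\<^sub>R i)) field_differentiable (at (0::real))"
    and "\<And>is. set is \<subseteq> Basis \<Longrightarrow> length is \<le> horder g \<Longrightarrow> bounded (range (dpart is f))"
    and "\<And>is. is \<in> multi_idx (horder g) \<Longrightarrow> bdd_above (holder_quot (horder g) g (dpart is f))"
  using assms unfolding in_Cg_def Let_def by auto

lemma dir_deriv:
  fixes G :: "real^'n \<Rightarrow> real"
  assumes "\<And>y. (\<lambda>t. G (y + t *\<^sub>R i)) field_differentiable (at (0::real))"
  shows "((\<lambda>t. G (x + t *\<^sub>R i)) has_real_derivative partial_dir i G (x + s *\<^sub>R i)) (at s)"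
proof -
  define y where "y = x + s *\<^sub>R i"
  have "((\<lambda>t. G (y + t *\<^sub>R i)) has_real_derivative partial_dir i G y) (at 0)"
    unfolding partial_dir_def using assms[of y] DERIV_deriv_iff_field_differentiable by blast
  moreover have "(\<lambda>t. G (y + t *\<^sub>R i)) = (\<lambda>t. (\<lambda>t. G (x + t *\<^sub>R i)) (t + s))"
    unfolding y_def by (rule ext) (simp add: scaleR_add_left algebra_simps)
  ultimately have "((\<lambda>t. G (x + t *\<^sub>R i)) has_real_derivative partial_dir i G y) (at (0 + s))"
    using DERIV_shift[of "\<lambda>t. G (x + t *\<^sub>R i)" _ 0 s] by simp
  then show ?thesis unfolding y_def by simp
qed

lemma lip1d:
  fixes \<phi> \<phi>' :: "real \<Rightarrow> real"
  assumes "\<And>s. (\<phi> has_real_derivative \<phi>' s) (at s)" "\<And>s. \<bar>\<phi>' s\<bar> \<le> L"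
  shows "\<bar>\<phi> a - \<phi> b\<bar> \<le> L * \<bar>a - b\<bar>"
  using field_differentiable_bound[of UNIV \<phi> \<phi>' L a b] assms by (auto simp: has_field_derivative_at_within)

lemma interp1d:
  fixes \<phi> \<phi>' :: "real \<Rightarrow> real"
  assumes t: "0 < t" and d: "\<And>s. (\<phi> has_real_derivative \<phi>' s) (at s)"
    and A: "\<And>s. \<bar>\<phi> s\<bar> \<le> A" and B: "\<And>s. 0 \<le> s \<Longrightarrow> s \<le> t \<Longrightarrow> \<bar>\<phi>' s - \<phi>' 0\<bar> \<le> B"
  shows "\<bar>\<phi>' 0\<bar> \<le> 2 * A / t + B"
proof -
  obtain z where z: "0 < z" "z < t" "\<phi> t - \<phi> 0 = (t - 0) * \<phi>' z"
    using MVT2[OF t, of \<phi> \<phi>'] d by blast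
  have "\<bar>\<phi> t - \<phi> 0\<bar> \<le> 2 * A" using A[of t] A[of 0] by linarith
  then have "t * \<bar>\<phi>' z\<bar> \<le> 2 * A" using z t by (simp add: abs_mult)
  then have "\<bar>\<phi>' z\<bar> \<le> 2 * A / t" using t by (simp add: field_simps)
  moreover have "\<bar>\<phi>' z - \<phi>' 0\<bar> \<le> B" using B[of z] z by simp
  ultimately show ?thesis by linarith
qed

lemma step_lip:
  fixes G :: "real^'n \<Rightarrow> real"
  assumes diff: "\<And>y. (\<lambda>t. G (y + t *\<^sub>R i)) field_differentiable (at (0::real))"
    and bnd: "\<And>y. \<bar>partial_dir i G y\<bar> \<le> L"
  shows "\<bar>G (y + c *\<^sub>R i) - G y\<bar> \<le> \<bar>c\<bar> * L"
proof -
  have "\<bar>(\<lambda>t. G (y + t *\<^sub>R i)) c - (\<lambda>t. G (y + t *\<^sub>R i)) 0\<bar> \<le> L * \<bar>c - 0\<bar>"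
    by (rule lip1d[where \<phi>'="\<lambda>s. partial_dir i G (y + s *\<^sub>R i)"])
       (use dir_deriv[OF diff] bnd in auto)
  then show ?thesis by (simp add: mult.commute)
qed

lemma lip_multi:
  fixes G :: "real^'n \<Rightarrow> real"
  assumes diff: "\<And>i y. i \<in> Basis \<Longrightarrow> (\<lambda>t. G (y + t *\<^sub>R i)) field_differentiable (at (0::real))"
    and bnd: "\<And>i y. i \<in> Basis \<Longrightarrow> \<bar>partial_dir i G y\<bar> \<le> L"
  shows "\<bar>G (x + h) - G x\<bar> \<le> real (card (Basis :: (real^'n) set)) * norm h * L"
proof -
  have L: "0 \<le> L" using bnd[of "SOME i. i \<in> Basis" 0] nonempty_Basis
    by (metis abs_ge_zero order_trans some_in_eq)
  have main: "\<And>x. \<bar>G (x + (\<Sum>i\<in>T. (h \<bullet> i) *\<^sub>R i)) - G x\<bar> \<le> (\<Sum>i\<in>T. \<bar>h \<bullet> i\<bar>) * L"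
    if "finite T" "T \<subseteq> Basis" for T
    using that
  proof (induction T rule: finite_induct)
    case empty then show ?case by simp
  next
    case (insert a T)
    have a: "a \<in> Basis" using insert by auto
    have "\<bar>G (x + (\<Sum>i\<in>insert a T. (h \<bullet> i) *\<^sub>R i)) - G x\<bar> \<le> (\<Sum>i\<in>insert a T. \<bar>h \<bullet> i\<bar>) * L" for x
    proof -
      have "\<bar>G (x + (h \<bullet> a) *\<^sub>R a + (\<Sum>i\<in>T. (h \<bullet> i) *\<^sub>R i)) - G (x + (h \<bullet> a) *\<^sub>R a)\<bar>
            \<le> (\<Sum>i\<in>T. \<bar>h \<bullet> i\<bar>) * L" using insert by auto
      moreover have "\<bar>G (x + (h \<bullet> a) *\<^sub>R a) - G x\<bar> \<le> \<bar>h \<bullet> a\<bar> * L"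
        by (rule step_lip) (use diff bnd a in auto)
      ultimately have "\<bar>G (x + (h \<bullet> a) *\<^sub>R a + (\<Sum>i\<in>T. (h \<bullet> i) *\<^sub>R i)) - G x\<bar>
            \<le> (\<bar>h \<bullet> a\<bar> + (\<Sum>i\<in>T. \<bar>h \<bullet> i\<bar>)) * L" by (simp add: algebra_simps)
      then show ?thesis using insert by (simp add: add.assoc)
    qed
    then show ?case by blast
  qed
  have "\<bar>G (x + h) - G x\<bar> \<le> (\<Sum>i\<in>Basis. \<bar>h \<bullet> i\<bar>) * L"
    using main[of Basis x] by (simp add: euclidean_representation)
  also have "\<dots> \<le> (\<Sum>i\<in>(Basis::(real^'n) set). norm h) * L"
    by (intro mult_right_mono sum_mono L) (simp add: Basis_le_norm)
  finally show ?thesis by simp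
qed

lemma dec_bound:
  assumes "almost_decreasing (\<lambda>r. g r / r powr \<beta>)" "g 1 = 1"
  shows "\<exists>C\<ge>1. \<forall>r. 0 < r \<and> r \<le> 1 \<longrightarrow> r powr \<beta> \<le> C * g r"
proof -
  obtain C where C: "1 \<le> C" "\<And>r R. 0 < r \<and> r \<le> R \<and> R \<le> 1 \<Longrightarrow> g R / R powr \<beta> \<le> C * (g r / r powr \<beta>)"
    using assms(1) unfolding almost_decreasing_def by blast
  have "r powr \<beta> \<le> C * g r" if "0 < r" "r \<le> 1" for r
  proof -
    have "1 \<le> C * (g r / r powr \<beta>)" using C(2)[of r 1] that assms(2) by simp
    then show ?thesis using that by (simp add: field_simps)
  qed
  then show ?thesis using C(1) by blast
qed

lemma inc_bound:
  assumes "almost_increasing (\<lambda>r. g r / r powr \<alpha>)" "g 1 = 1"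
  shows "\<exists>c>0. \<forall>r. 0 < r \<and> r \<le> 1 \<longrightarrow> c * g r \<le> r powr \<alpha>"
proof -
  obtain c where c: "0 < c" "\<And>r R. 0 < r \<and> r \<le> R \<and> R \<le> 1 \<Longrightarrow> c * (g r / r powr \<alpha>) \<le> g R / R powr \<alpha>"
    using assms(1) unfolding almost_increasing_def by blast
  have "c * g r \<le> r powr \<alpha>" if "0 < r" "r \<le> 1" for r
  proof -
    have "c * (g r / r powr \<alpha>) \<le> 1" using c(2)[of r 1] that assms(2) by simp
    then show ?thesis using that by (simp add: field_simps)
  qed
  then show ?thesis using c(1) by blast
qed

lemma inc_dec_le:
  assumes pos: "\<And>r. 0 < r \<Longrightarrow> r \<le> 1 \<Longrightarrow> 0 < g r"
    and a: "almost_increasing (\<lambda>r. g r / r powr a)" and b: "almost_decreasing (\<lambda>r. g r / r powr b)"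
  shows "a \<le> b"
proof (rule ccontr)
  assume "\<not> a \<le> b" then have ab: "0 < a - b" by simp
  obtain c where c: "0 < c" "c \<le> 1" "\<And>r R. 0 < r \<and> r \<le> R \<and> R \<le> 1 \<Longrightarrow> c * (g r / r powr a) \<le> g R / R powr a"
    using a unfolding almost_increasing_def by blast
  obtain C where C: "1 \<le> C" "\<And>r R. 0 < r \<and> r \<le> R \<and> R \<le> 1 \<Longrightarrow> g R / R powr b \<le> C * (g r / r powr b)"
    using b unfolding almost_decreasing_def by blast
  define r where "r = (c / (2 * C)) powr (1 / (a - b))"
  have q: "0 < c / (2 * C)" "c / (2 * C) \<le> 1" using c C by (auto simp: field_simps)
  have r0: "0 < r" unfolding r_def using q c C by simp
  have r1: "r \<le> 1" unfolding r_def using q ab c C by (simp add: powr_le1)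
  have rp: "r powr (a - b) = c / (2 * C)" unfolding r_def using q ab c C by (simp add: powr_powr)
  have "c * (g r / r powr a) \<le> g 1" using c(3)[of r 1] r0 r1 by simp
  also have "\<dots> \<le> C * (g r / r powr b)" using C(2)[of r 1] r0 r1 by simp
  finally have "c * (g r / r powr a) \<le> C * (g r / r powr b)" .
  then have "c * r powr b \<le> C * r powr a" using pos[OF r0 r1] r0 by (simp add: field_simps)
  moreover have "r powr a = r powr (a - b) * r powr b" using r0 by (simp add: powr_add[symmetric])
  then have "C * r powr a = (C * (c / (2 * C))) * r powr b" by (simp only: rp mult.assoc)
  ultimately have h1: "c * r powr b \<le> (C * (c / (2 * C))) * r powr b" by linarith
  have h2: "C * (c / (2 * C)) = c / 2" using C by simp
  have "c * r powr b \<le> (c / 2) * r powr b" using h1 unfolding h2 .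
  moreover have "0 < r powr b" using r0 by simp
  ultimately have "c \<le> c / 2" by (rule mult_right_le_imp_le)
  then show False using c by simp
qed

lemma lower_le_upper:
  assumes pos: "\<And>r. 0 < r \<Longrightarrow> r \<le> 1 \<Longrightarrow> 0 < g r"
  shows "lower_index g \<le> upper_index g"
  unfolding lower_index_def upper_index_def
  by (rule Sup_least, rule Inf_greatest) (auto intro: inc_dec_le[OF pos])

lemma no_int_U:
  assumes "real_of_int z \<in> {0<..<1} \<union> {1<..<2} \<union> {2<..<3::real}" shows False
proof -
  have "(0 < z \<and> z < 1) \<or> (1 < z \<and> z < 2) \<or> (2 < z \<and> z < 3)"
    using assms by auto
  then show False by linarith
qed

lemma const_of_tiny:
  fixes f :: "real^'n \<Rightarrow> real"
  assumes K: "0 \<le> K" and hyp: "\<And>x h. 0 < norm h \<Longrightarrow> norm h \<le> 1 \<Longrightarrow> \<bar>f (x + h) - f x\<bar> \<le> K * norm h ^ 2"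
  shows "f y = f x"
proof (rule ccontr)
  assume ne: "f y \<noteq> f x"
  define D where "D = \<bar>f y - f x\<bar>"
  have D: "0 < D" using ne unfolding D_def by simp
  define d where "d = norm (y - x)"
  obtain n :: nat where n: "max 1 (max d (K * d^2 / D)) < real n" using reals_Archimedean2 by blast
  have n0: "0 < real n" using n by linarith
  define p where "p i = x + (real i / real n) *\<^sub>R (y - x)" for i
  have hyp': "\<bar>f (z + h) - f z\<bar> \<le> K * norm h ^ 2" if "norm h \<le> 1" for z h
  proof (cases "h = 0")
    case True then show ?thesis by simp
  next
    case False then show ?thesis using hyp[of h z] that by simp
  qed
  have step: "\<bar>f (p (Suc i)) - f (p i)\<bar> \<le> K * (d / real n) ^ 2" for i
  proof -
    have e: "p (Suc i) = p i + (1 / real n) *\<^sub>R (y - x)"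
      unfolding p_def using n0 by (simp add: add_divide_distrib scaleR_add_left algebra_simps)
    have nr: "norm ((1 / real n) *\<^sub>R (y - x)) = d / real n" unfolding d_def using n0 by simp
    have "d / real n \<le> 1" using n n0 by (simp add: field_simps)
    then show ?thesis using hyp'[of "(1 / real n) *\<^sub>R (y - x)" "p i"] unfolding e nr by simp
  qed
  have "f y - f x = (\<Sum>i<n. f (p (Suc i)) - f (p i))"
    by (subst sum_lessThan_telescope) (use n0 in \<open>simp add: p_def\<close>)
  then have "D \<le> (\<Sum>i<n. \<bar>f (p (Suc i)) - f (p i)\<bar>)" unfolding D_def by (simp add: sum_abs)
  also have "\<dots> \<le> (\<Sum>i<n. K * (d / real n) ^ 2)" by (intro sum_mono step)
  also have "\<dots> = K * d^2 / real n" using n0 by (simp add: power2_eq_square field_simps)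
  finally have "D * real n \<le> K * d^2" using n0 by (simp add: field_simps)
  moreover have "K * d^2 < D * real n" using n D by (simp add: field_simps)
  ultimately show False by simp
qed

lemma partial_dir_const: "partial_dir i (\<lambda>_. a) = (\<lambda>_. (0::real))"
  unfolding partial_dir_def by (rule ext) (simp add: DERIV_imp_deriv)

lemma dpart_const: "is \<noteq> [] \<Longrightarrow> dpart is (\<lambda>_. a) = (\<lambda>_. (0::real))"
proof (induction "is")
  case Nil then show ?case by simp
next
  case (Cons i js) then show ?case by (cases "js = []") (auto simp: partial_dir_const)
qed

lemma sup0_const: "sup0 (\<lambda>_::real^'n. a) = \<bar>a\<bar>"
  unfolding sup0_def by simp

lemma normD_const: "normD j (\<lambda>_::real^'n. a) = (if j = 0 then \<bar>a\<bar> else 0)"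
proof (cases "j = 0")
  case True then show ?thesis by (simp add: normD_0 sup0_const)
next
  case False
  have z: "\<And>is. is \<in> multi_idx j \<Longrightarrow> sup0 (dpart is (\<lambda>_::real^'n. a)) = 0"
    using False by (auto simp: multi_idx_def dpart_const sup0_const)
  have "normD j (\<lambda>_::real^'n. a) = (SUP is\<in>(multi_idx j :: (real^'n) list set). (0::real))"
    unfolding normD_def by (rule SUP_cong[OF refl]) (rule z)
  then show ?thesis using False multi_ne[where j=j, where 'n='n] by simp
qed

lemma holder_semi_const: "holder_semi j g (\<lambda>_::real^'n. a) = 0"
proof -
  have "holder_quot j g (\<lambda>_::real^'n. a) = {0}"
    using quot_ne[of j g "\<lambda>_::real^'n. a"] unfolding holder_quot_def by auto
  then show ?thesis unfolding holder_semi_def by simp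
qed

lemma holder_semiD_const: "holder_semiD k g (\<lambda>_::real^'n. a) = 0"
proof -
  have "\<And>is. holder_semi k g (dpart is (\<lambda>_::real^'n. a)) = 0"
  proof -
    fix "is" :: "(real^'n) list"
    show "holder_semi k g (dpart is (\<lambda>_::real^'n. a)) = 0"
      by (cases "is = []") (simp_all add: dpart_const holder_semi_const)
  qed
  then show ?thesis unfolding holder_semiD_def using multi_ne[where j=k, where 'n='n] by simp
qed

lemma Cg_norm_const: "Cg_norm g (\<lambda>_::real^'n. a) = \<bar>a\<bar>"
  unfolding Cg_norm_def holder_semiD_const normD_const
  by (simp add: sum.delta)

lemma pt_bound:
  fixes f :: "real^'n \<Rightarrow> real"
  assumes "in_Cg g f" "is \<in> multi_idx j" "j \<le> horder g"
  shows "\<bar>dpart is f y\<bar> \<le> normD j f"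
  using assms in_Cg_D(2)[OF assms(1), of "is"] by (intro pt_le_normD) (auto simp: multi_idx_def)

lemma normD_nonneg:
  fixes f :: "real^'n \<Rightarrow> real"
  assumes "in_Cg g f" "j \<le> horder g" shows "0 \<le> normD j f"
proof -
  obtain is' where "is' \<in> (multi_idx j :: (real^'n) list set)" using multi_ne by blast
  then show ?thesis using pt_bound[OF assms(1) _ assms(2), of is' 0] by linarith
qed

lemma quot_nonneg:
  assumes "\<And>r. 0 < r \<Longrightarrow> r \<le> 1 \<Longrightarrow> 0 < g r" "0 < norm h" "norm h \<le> 1"
  shows "0 \<le> \<bar>F (x + h) - F x\<bar> / (g (norm h) * norm h powr (- real j))"
  using assms by (intro divide_nonneg_pos) auto

lemma hsD_nonneg:
  fixes f :: "real^'n \<Rightarrow> real"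
  assumes f: "in_Cg g f" and pos: "\<And>r. 0 < r \<Longrightarrow> r \<le> 1 \<Longrightarrow> 0 < g r"
  shows "0 \<le> holder_semiD (horder g) g f"
proof -
  obtain is' where i: "is' \<in> (multi_idx (horder g) :: (real^'n) list set)" using multi_ne by blast
  obtain b :: "real^'n" where b: "b \<in> Basis" using nonempty_Basis by blast
  then have nb: "norm b = 1" by simp
  have "0 \<le> \<bar>dpart is' f (0 + b) - dpart is' f 0\<bar> / (g (norm b) * norm b powr (- real (horder g)))"
    by (rule quot_nonneg[OF pos]) (use nb in auto)
  also have "\<dots> \<le> holder_semi (horder g) g (dpart is' f)"
    by (rule hq_le) (use in_Cg_D(3)[OF f i] nb in auto)
  also have "\<dots> \<le> holder_semiD (horder g) g f" by (rule hsD_ge[OF i])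
  finally show ?thesis .
qed

lemma holder_pt:
  fixes f :: "real^'n \<Rightarrow> real"
  assumes f: "in_Cg g f" and pos: "\<And>r. 0 < r \<Longrightarrow> r \<le> 1 \<Longrightarrow> 0 < g r"
    and i: "is \<in> multi_idx (horder g)" and h: "0 < norm h" "norm h \<le> 1"
  shows "\<bar>dpart is f (x + h) - dpart is f x\<bar> \<le> holder_semiD (horder g) g f * (g (norm h) * norm h powr (- real (horder g)))"
proof -
  have "\<bar>dpart is f (x + h) - dpart is f x\<bar> / (g (norm h) * norm h powr (- real (horder g)))
        \<le> holder_semi (horder g) g (dpart is f)"
    by (rule hq_le) (use in_Cg_D(3)[OF f i] h in auto)
  also have "\<dots> \<le> holder_semiD (horder g) g f" by (rule hsD_ge[OF i])
  finally show ?thesis using pos[OF h] h by (simp add: divide_le_eq)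
qed

lemma top_interp:
  fixes f :: "real^'n \<Rightarrow> real"
  assumes f: "in_Cg g f" and pos: "\<And>r. 0 < r \<Longrightarrow> r \<le> 1 \<Longrightarrow> 0 < g r"
    and K: "horder g = Suc J" and c: "0 < c" "\<And>r. 0 < r \<Longrightarrow> r \<le> 1 \<Longrightarrow> c * g r \<le> r powr \<alpha>"
    and \<alpha>: "real (Suc J) \<le> \<alpha>" and t: "0 < t" "t \<le> 1"
  shows "normD (Suc J) f \<le> 2 * normD J f / t + holder_semiD (Suc J) g f * (t powr (\<alpha> - real (Suc J)) / c)"
proof (rule normD_le)
  fix "is" :: "(real^'n) list" assume "is \<in> multi_idx (Suc J)"
  then obtain e js where e: "is = e # js" "e \<in> Basis" "js \<in> multi_idx J" using multi_Suc by blast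
  define S where "S = holder_semiD (Suc J) g f"
  have S0: "0 \<le> S" unfolding S_def using hsD_nonneg[OF f pos] K by simp
  have isK: "is \<in> multi_idx (horder g)" using \<open>is \<in> _\<close> K by simp
  show "sup0 (dpart is f) \<le> 2 * normD J f / t + S * (t powr (\<alpha> - real (Suc J)) / c)"
  proof (rule sup0_le)
    fix y
    have diff: "\<And>y. (\<lambda>s. dpart js f (y + s *\<^sub>R e)) field_differentiable (at (0::real))"
      by (rule in_Cg_D(1)[OF f]) (use e K in \<open>auto simp: multi_idx_def\<close>)
    have "\<bar>(\<lambda>s. partial_dir e (dpart js f) (y + s *\<^sub>R e)) 0\<bar>
          \<le> 2 * normD J f / t + S * (t powr (\<alpha> - real (Suc J)) / c)"
    proof (rule interp1d[OF t(1), where \<phi>="\<lambda>s. dpart js f (y + s *\<^sub>R e)" and \<phi>'="\<lambda>s. partial_dir e (dpart js f) (y + s *\<^sub>R e)"])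
      show "\<And>s. ((\<lambda>s. dpart js f (y + s *\<^sub>R e)) has_real_derivative partial_dir e (dpart js f) (y + s *\<^sub>R e)) (at s)"
        by (rule dir_deriv[OF diff])
      show "\<And>s. \<bar>dpart js f (y + s *\<^sub>R e)\<bar> \<le> normD J f"
        by (rule pt_bound[OF f e(3)]) (use K in simp)
      fix s :: real assume s: "0 \<le> s" "s \<le> t"
      show "\<bar>partial_dir e (dpart js f) (y + s *\<^sub>R e) - partial_dir e (dpart js f) (y + 0 *\<^sub>R e)\<bar>
            \<le> S * (t powr (\<alpha> - real (Suc J)) / c)"
      proof (cases "s = 0")
        case True then show ?thesis using S0 c t by simp
      next
        case False
        then have s0: "0 < s" using s by simp
        have ns: "norm (s *\<^sub>R e) = s" using e s by simp
        have q1: "\<bar>dpart is f (y + s *\<^sub>R e) - dpart is f y\<bar> \<le> S * (g s * s powr (- real (Suc J)))"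
        proof -
          have h1: "0 < norm (s *\<^sub>R e)" "norm (s *\<^sub>R e) \<le> 1" using ns s0 s t by auto
          show ?thesis using holder_pt[OF f pos isK h1, of y] by (simp only: ns K S_def[symmetric])
        qed
        have q2a: "g s * s powr (- real (Suc J)) \<le> (s powr \<alpha> / c) * s powr (- real (Suc J))"
        proof (rule mult_right_mono)
          show "g s \<le> s powr \<alpha> / c" using c(2)[of s] s0 s t c(1) by (simp add: field_simps)
        qed simp
        have q2b: "(s powr \<alpha> / c) * s powr (- real (Suc J)) = s powr (\<alpha> - real (Suc J)) / c"
        proof -
          have "s powr \<alpha> * s powr (- real (Suc J)) = s powr (\<alpha> - real (Suc J))"
            by (simp only: powr_add[symmetric] diff_conv_add_uminus)
          then show ?thesis by (simp only: times_divide_eq_left)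
        qed
        have q2c: "s powr (\<alpha> - real (Suc J)) / c \<le> t powr (\<alpha> - real (Suc J)) / c"
          using s s0 \<alpha> c(1) by (intro divide_right_mono powr_mono2) auto
        have q2: "g s * s powr (- real (Suc J)) \<le> t powr (\<alpha> - real (Suc J)) / c"
          using q2a q2b q2c by linarith
        have "\<bar>dpart is f (y + s *\<^sub>R e) - dpart is f y\<bar> \<le> S * (t powr (\<alpha> - real (Suc J)) / c)"
          using q1 mult_left_mono[OF q2 S0] by linarith
        then show ?thesis using e by simp
      qed
    qed
    then show "\<bar>dpart is f y\<bar> \<le> 2 * normD J f / t + S * (t powr (\<alpha> - real (Suc J)) / c)"
      using e by simp
  qed
qed

lemma mid_interp:
  fixes f :: "real^'n \<Rightarrow> real"
  assumes f: "in_Cg g f" and K: "2 \<le> horder g" and t: "0 < t"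
  shows "normD 1 f \<le> 2 * normD 0 f / t + t * normD 2 f"
proof (rule normD_le)
  fix "is" :: "(real^'n) list" assume "is \<in> multi_idx 1"
  then have "is \<in> multi_idx (Suc 0)" by simp
  then obtain e js where e: "is = e # js" "e \<in> Basis" "js \<in> multi_idx 0" using multi_Suc by blast
  then have js: "js = []" by (simp add: multi_0)
  show "sup0 (dpart is f) \<le> 2 * normD 0 f / t + t * normD 2 f"
  proof (rule sup0_le)
    fix y
    have diff: "\<And>y. (\<lambda>s. f (y + s *\<^sub>R e)) field_differentiable (at (0::real))"
      using in_Cg_D(1)[OF f, of "[]" e] e K by auto
    have diff2: "\<And>y. (\<lambda>s. partial_dir e f (y + s *\<^sub>R e)) field_differentiable (at (0::real))"
      using in_Cg_D(1)[OF f, of "[e]" e] e K by auto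
    have b2: "\<And>y. \<bar>partial_dir e (partial_dir e f) y\<bar> \<le> normD 2 f"
      using pt_bound[OF f, of "[e, e]" 2] e K by (auto simp: multi_idx_def)
    have "\<bar>(\<lambda>s. partial_dir e f (y + s *\<^sub>R e)) 0\<bar> \<le> 2 * normD 0 f / t + t * normD 2 f"
    proof (rule interp1d[OF t, where \<phi>="\<lambda>s. f (y + s *\<^sub>R e)" and \<phi>'="\<lambda>s. partial_dir e f (y + s *\<^sub>R e)"])
      show "\<And>s. ((\<lambda>s. f (y + s *\<^sub>R e)) has_real_derivative partial_dir e f (y + s *\<^sub>R e)) (at s)"
        by (rule dir_deriv[OF diff])
      show "\<And>s. \<bar>f (y + s *\<^sub>R e)\<bar> \<le> normD 0 f"
        using pt_bound[OF f, of "[]" 0] by (simp add: multi_0)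
      fix s :: real assume s: "0 \<le> s" "s \<le> t"
      have "\<bar>partial_dir e f (y + s *\<^sub>R e) - partial_dir e f y\<bar> \<le> \<bar>s\<bar> * normD 2 f"
        by (rule step_lip[OF diff2 b2])
      also have "\<dots> \<le> t * normD 2 f"
        using s normD_nonneg[OF f K] by (intro mult_right_mono) auto
      finally show "\<bar>partial_dir e f (y + s *\<^sub>R e) - partial_dir e f (y + 0 *\<^sub>R e)\<bar> \<le> t * normD 2 f"
        by simp
    qed
    then show "\<bar>dpart is f y\<bar> \<le> 2 * normD 0 f / t + t * normD 2 f" using e js by simp
  qed
qed

lemma lip_level:
  fixes f :: "real^'n \<Rightarrow> real"
  assumes f: "in_Cg g f" and i: "is \<in> multi_idx j" and j: "j < horder g"
  shows "\<bar>dpart is f (x + h) - dpart is f x\<bar> \<le> real (card (Basis :: (real^'n) set)) * norm h * normD (Suc j) f"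
proof (rule lip_multi)
  show "\<And>i y. i \<in> Basis \<Longrightarrow> (\<lambda>t. dpart is f (y + t *\<^sub>R i)) field_differentiable (at 0)"
    by (rule in_Cg_D(1)[OF f]) (use i j in \<open>auto simp: multi_idx_def\<close>)
  fix i y assume "i \<in> (Basis :: (real^'n) set)"
  then have "i # is \<in> multi_idx (Suc j)" using i by (rule multi_Cons)
  then show "\<bar>partial_dir i (dpart is f) y\<bar> \<le> normD (Suc j) f"
    using pt_bound[OF f, of "i # is" "Suc j" y] j by simp
qed

lemma small_t:
  fixes p q :: real
  assumes p: "0 < p" and q: "0 < q"
  shows "\<exists>t::real. 0 < t \<and> t \<le> 1 \<and> t powr p \<le> q"
proof -
  define t where "t = min 1 (q powr (1 / p))"
  have t0: "0 < t" unfolding t_def using q by simp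
  have "t powr p \<le> (q powr (1 / p)) powr p"
    using t0 p unfolding t_def by (intro powr_mono2) auto
  also have "\<dots> = q" using p q by (simp add: powr_powr)
  finally have "t powr p \<le> q" .
  moreover have "t \<le> 1" unfolding t_def by simp
  ultimately show ?thesis using t0 by blast
qed

lemma Cg_parts:
  fixes f :: "real^'n \<Rightarrow> real"
  assumes f: "in_Cg g f" and pos: "\<And>r. 0 < r \<Longrightarrow> r \<le> 1 \<Longrightarrow> 0 < g r"
  shows "\<And>i. i \<le> horder g \<Longrightarrow> normD i f \<le> Cg_norm g f"
    and "holder_semiD (horder g) g f \<le> Cg_norm g f"
    and "0 \<le> Cg_norm g f"
proof -
  have S0: "0 \<le> holder_semiD (horder g) g f" by (rule hsD_nonneg[OF f pos])
  have N0: "\<And>i. i \<in> {..horder g} \<Longrightarrow> 0 \<le> normD i f" using normD_nonneg[OF f] by auto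
  have sum0: "0 \<le> (\<Sum>j\<le>horder g. normD j f)" by (rule sum_nonneg) (rule N0)
  show "normD i f \<le> Cg_norm g f" if "i \<le> horder g" for i
  proof -
    have "normD i f \<le> (\<Sum>j\<le>horder g. normD j f)"
      by (rule member_le_sum) (use that N0 in auto)
    then show ?thesis unfolding Cg_norm_def using S0 by linarith
  qed
  show "holder_semiD (horder g) g f \<le> Cg_norm g f" unfolding Cg_norm_def using sum0 by linarith
  show "0 \<le> Cg_norm g f" unfolding Cg_norm_def using sum0 S0 by linarith
qed

lemma sup0_nonneg:
  fixes f :: "real^'n \<Rightarrow> real"
  assumes f: "in_Cg g f" shows "0 \<le> sup0 f"
  using normD_nonneg[OF f, of 0] by (simp add: normD_0)

lemma N2_bound:
  fixes g :: "real \<Rightarrow> real"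
  assumes pos: "\<And>r. 0 < r \<Longrightarrow> r \<le> 1 \<Longrightarrow> 0 < g r" and K: "horder g = 2"
    and c: "0 < c" "\<And>r. 0 < r \<Longrightarrow> r \<le> 1 \<Longrightarrow> c * g r \<le> r powr \<alpha>" and \<alpha>: "2 < \<alpha>"
    and \<delta>: "0 < \<delta>"
  shows "\<exists>C\<ge>0. \<forall>f :: real^'n \<Rightarrow> real. in_Cg g f \<longrightarrow> normD 2 f \<le> C * sup0 f + \<delta> * Cg_norm g f"
proof -
  obtain t where t: "0 < t" "t \<le> 1" "t powr (\<alpha> - 2) \<le> c * (\<delta> / 2)"
    using small_t[of "\<alpha> - 2" "c * (\<delta> / 2)"] \<alpha> c \<delta> by auto
  have tc: "t powr (\<alpha> - real (Suc 1)) / c \<le> \<delta> / 2" using t c by (simp add: divide_le_eq mult.commute)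
  show ?thesis
  proof (intro exI[of _ "32 / t^2"] conjI allI impI)
    show "0 \<le> 32 / t^2" by simp
    fix f :: "real^'n \<Rightarrow> real" assume f: "in_Cg g f"
    define a where "a = normD 0 f"
    define b where "b = normD 1 f"
    define n where "n = normD 2 f"
    define \<sigma> where "\<sigma> = holder_semiD 2 g f"
    have \<sigma>0: "0 \<le> \<sigma>" unfolding \<sigma>_def using hsD_nonneg[OF f pos] K by simp
    have h1: "n \<le> 2 * b / t + \<sigma> * (t powr (\<alpha> - real (Suc 1)) / c)"
      using top_interp[OF f pos _ c, of 1] K \<alpha> t unfolding n_def b_def \<sigma>_def by (simp add: numeral_2_eq_2)
    have h1': "\<sigma> * (t powr (\<alpha> - real (Suc 1)) / c) \<le> (\<delta> * \<sigma>) / 2"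
      using mult_left_mono[OF tc \<sigma>0] by (simp add: mult.commute)
    define B' where "B' = 2 * a / (t / 4) + (t / 4) * n"
    have h2: "b \<le> B'"
      using mid_interp[OF f _, of "t / 4"] K t unfolding a_def b_def n_def B'_def by simp
    have h3: "2 * b / t \<le> 2 * B' / t"
      by (rule divide_right_mono) (use h2 t in auto)
    have h4: "2 * B' / t = 16 * (a / t^2) + n / 2"
      using t unfolding B'_def by (simp add: field_simps power2_eq_square)
    have "n \<le> 32 * (a / t^2) + \<delta> * \<sigma>" using h1 h1' h3 h4 by linarith
    moreover have "\<sigma> \<le> Cg_norm g f" using Cg_parts(2)[OF f pos] K unfolding \<sigma>_def by simp
    then have "\<delta> * \<sigma> \<le> \<delta> * Cg_norm g f" using \<delta> by (intro mult_left_mono) auto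
    ultimately have "n \<le> 32 * (a / t^2) + \<delta> * Cg_norm g f" by linarith
    then show "normD 2 f \<le> 32 / t^2 * sup0 f + \<delta> * Cg_norm g f"
      unfolding n_def a_def normD_0 by simp
  qed
qed

lemma SM:
  fixes g :: "real \<Rightarrow> real"
  assumes pos: "\<And>r. 0 < r \<Longrightarrow> r \<le> 1 \<Longrightarrow> 0 < g r" and K2: "horder g \<le> 2"
    and c: "0 < c" "\<And>r. 0 < r \<Longrightarrow> r \<le> 1 \<Longrightarrow> c * g r \<le> r powr \<alpha>" and \<alpha>: "real (horder g) < \<alpha>"
    and j: "j \<le> horder g" and \<delta>: "0 < \<delta>"
  shows "\<exists>C\<ge>0. \<forall>f :: real^'n \<Rightarrow> real. in_Cg g f \<longrightarrow> normD j f \<le> C * sup0 f + \<delta> * Cg_norm g f"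
proof -
  have "j = 0 \<or> (j = 1 \<and> horder g = 1) \<or> (j = 1 \<and> horder g = 2) \<or> (j = 2 \<and> horder g = 2)"
    using j K2 by auto
  moreover
  { assume j0: "j = 0"
    have ?thesis
    proof (intro exI[of _ 1] conjI allI impI)
      fix f :: "real^'n \<Rightarrow> real" assume f: "in_Cg g f"
      have "0 \<le> \<delta> * Cg_norm g f" using Cg_parts(3)[OF f pos] \<delta> by simp
      then show "normD j f \<le> 1 * sup0 f + \<delta> * Cg_norm g f" using j0 by (simp add: normD_0)
    qed simp }
  moreover
  { assume jK: "j = 1" "horder g = 1"
    obtain t where t: "0 < t" "t \<le> 1" "t powr (\<alpha> - 1) \<le> c * \<delta>"
      using small_t[of "\<alpha> - 1" "c * \<delta>"] \<alpha> c \<delta> jK by auto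
    have tc: "t powr (\<alpha> - real (Suc 0)) / c \<le> \<delta>" using t c by (simp add: divide_le_eq mult.commute)
    have ?thesis
    proof (intro exI[of _ "2 / t"] conjI allI impI)
      show "0 \<le> 2 / t" using t by simp
      fix f :: "real^'n \<Rightarrow> real" assume f: "in_Cg g f"
      define \<sigma> where "\<sigma> = holder_semiD 1 g f"
      have \<sigma>0: "0 \<le> \<sigma>" unfolding \<sigma>_def using hsD_nonneg[OF f pos] jK by simp
      have h1: "normD 1 f \<le> 2 * normD 0 f / t + \<sigma> * (t powr (\<alpha> - real (Suc 0)) / c)"
        using top_interp[OF f pos _ c, of 0] jK \<alpha> t unfolding \<sigma>_def by simp
      have h2: "\<sigma> * (t powr (\<alpha> - real (Suc 0)) / c) \<le> \<sigma> * \<delta>" by (rule mult_left_mono[OF tc \<sigma>0])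
      have "\<sigma> \<le> Cg_norm g f" using Cg_parts(2)[OF f pos] jK unfolding \<sigma>_def by simp
      then have h3: "\<sigma> * \<delta> \<le> \<delta> * Cg_norm g f" using \<delta> by (simp add: mult.commute mult_left_mono)
      have h4: "2 * normD 0 f / t = 2 / t * sup0 f" by (simp add: normD_0)
      show "normD j f \<le> 2 / t * sup0 f + \<delta> * Cg_norm g f" using h1 h2 h3 h4 unfolding jK(1) by linarith
    qed }
  moreover
  { assume jK: "j = 1" "horder g = 2"
    have ?thesis
    proof (intro exI[of _ "2 / \<delta>"] conjI allI impI)
      show "0 \<le> 2 / \<delta>" using \<delta> by simp
      fix f :: "real^'n \<Rightarrow> real" assume f: "in_Cg g f"
      have h1: "normD 1 f \<le> 2 * normD 0 f / \<delta> + \<delta> * normD 2 f"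
        by (rule mid_interp[OF f _ \<delta>]) (use jK in simp)
      have "normD 2 f \<le> Cg_norm g f" using Cg_parts(1)[OF f pos, of 2] jK by simp
      then have h2: "\<delta> * normD 2 f \<le> \<delta> * Cg_norm g f" using \<delta> by (simp add: mult_left_mono)
      have h4: "2 * normD 0 f / \<delta> = 2 / \<delta> * sup0 f" by (simp add: normD_0)
      show "normD j f \<le> 2 / \<delta> * sup0 f + \<delta> * Cg_norm g f" using h1 h2 h4 unfolding jK(1) by linarith
    qed }
  moreover
  { assume jK: "j = 2" "horder g = 2"
    have ?thesis using N2_bound[OF pos jK(2) c _ \<delta>] \<alpha> jK by simp }
  ultimately show ?thesis by blast
qed

lemma P_lemma:
  fixes r \<beta> C1 k :: real and \<psi>1 :: "real \<Rightarrow> real"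
  assumes C1: "\<And>r. 0 < r \<Longrightarrow> r \<le> 1 \<Longrightarrow> r powr \<beta> \<le> C1 * \<psi>1 r" and r: "0 < r" "r \<le> 1"
  shows "r powr (\<beta> - k) \<le> C1 * \<psi>1 r * r powr (- k)"
proof -
  have "r powr (\<beta> - k) = r powr \<beta> * r powr (- k)"
    by (simp only: powr_add[symmetric] diff_conv_add_uminus)
  also have "\<dots> \<le> C1 * \<psi>1 r * r powr (- k)"
    by (rule mult_right_mono[OF C1[OF r]]) simp
  finally show ?thesis .
qed

lemma SH:
  fixes \<psi>1 g :: "real \<Rightarrow> real"
  assumes pos1: "\<And>r. 0 < r \<Longrightarrow> r \<le> 1 \<Longrightarrow> 0 < \<psi>1 r" and pos: "\<And>r. 0 < r \<Longrightarrow> r \<le> 1 \<Longrightarrow> 0 < g r"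
    and K2: "horder g \<le> 2" and kK: "horder \<psi>1 \<le> horder g"
    and C1: "0 < C1" "\<And>r. 0 < r \<Longrightarrow> r \<le> 1 \<Longrightarrow> r powr \<beta> \<le> C1 * \<psi>1 r"
    and c: "0 < c" "\<And>r. 0 < r \<Longrightarrow> r \<le> 1 \<Longrightarrow> c * g r \<le> r powr \<alpha>"
    and \<beta>k: "real (horder \<psi>1) < \<beta>" "\<beta> \<le> real (horder \<psi>1) + 1" and \<alpha>\<beta>: "\<beta> < \<alpha>"
    and \<alpha>K: "real (horder g) < \<alpha>" and \<delta>: "0 < \<delta>"
  shows "\<exists>C\<ge>0. \<forall>f :: real^'n \<Rightarrow> real. in_Cg g f \<longrightarrow>
           holder_semiD (horder \<psi>1) \<psi>1 f \<le> C * sup0 f + \<delta> * Cg_norm g f"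
proof (cases "horder \<psi>1 = horder g")
  case True
  define k where "k = horder \<psi>1"
  define \<delta>' where "\<delta>' = \<delta> / 2"
  have \<delta>': "0 < \<delta>'" unfolding \<delta>'_def using \<delta> by simp
  obtain r0 where r0: "0 < r0" "r0 \<le> 1" "r0 powr (\<alpha> - \<beta>) \<le> \<delta>' * c / C1"
    using small_t[of "\<alpha> - \<beta>" "\<delta>' * c / C1"] \<alpha>\<beta> \<delta>' c C1 by auto
  define Ck where "Ck = 2 * C1 / r0 powr (\<beta> - real k)"
  have Ck0: "0 \<le> Ck" unfolding Ck_def using C1 r0 by simp
  obtain C0 where C0: "0 \<le> C0" "\<And>f :: real^'n \<Rightarrow> real. in_Cg g f \<Longrightarrow> normD k f \<le> C0 * sup0 f + (\<delta>' / (Ck + 1)) * Cg_norm g f"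
    using SM[OF pos K2 c \<alpha>K, of k "\<delta>' / (Ck + 1)"] True \<delta>' Ck0 unfolding k_def by auto
  have gsmall: "g r \<le> \<delta>' * \<psi>1 r" if "0 < r" "r \<le> r0" for r
  proof -
    have r1: "r \<le> 1" using that r0 by simp
    have "c * g r \<le> r powr \<alpha>" by (rule c(2)[OF that(1) r1])
    also have "r powr \<alpha> = r powr (\<alpha> - \<beta>) * r powr \<beta>"
      by (simp only: powr_add[symmetric]) simp
    also have "\<dots> \<le> r0 powr (\<alpha> - \<beta>) * (C1 * \<psi>1 r)"
      by (intro mult_mono powr_mono2 C1(2)[OF that(1) r1]) (use that \<alpha>\<beta> in auto)
    also have "\<dots> \<le> (\<delta>' * c / C1) * (C1 * \<psi>1 r)"
      by (intro mult_right_mono r0(3)) (use C1 pos1[OF that(1) r1] in auto)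
    also have "\<dots> = c * (\<delta>' * \<psi>1 r)" using C1 by (simp add: field_simps)
    finally show ?thesis using c(1) by simp
  qed
  show ?thesis
  proof (intro exI[of _ "Ck * C0"] conjI allI impI)
    show "0 \<le> Ck * C0" using Ck0 C0 by simp
    fix f :: "real^'n \<Rightarrow> real" assume f: "in_Cg g f"
    define Sg where "Sg = holder_semiD (horder g) g f"
    define Nk where "Nk = normD k f"
    have Sg0: "0 \<le> Sg" unfolding Sg_def by (rule hsD_nonneg[OF f pos])
    have Nk0: "0 \<le> Nk" unfolding Nk_def using normD_nonneg[OF f] True k_def by simp
    have main: "holder_semiD k \<psi>1 f \<le> \<delta>' * Sg + Ck * Nk"
    proof (rule hsD_le, rule hs_le)
      fix "is" :: "(real^'n) list" and x h :: "real^'n"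
      assume i: "is \<in> multi_idx k" and h: "0 < norm h" "norm h \<le> 1"
      define r where "r = norm h"
      have r: "0 < r" "r \<le> 1" using h unfolding r_def by auto
      define D where "D = \<psi>1 r * r powr (- real k)"
      have D0: "0 < D" unfolding D_def using pos1[OF r] r by simp
      have "\<bar>dpart is f (x + h) - dpart is f x\<bar> \<le> (\<delta>' * Sg + Ck * Nk) * D"
      proof (cases "r \<le> r0")
        case True
        have iK: "is \<in> multi_idx (horder g)" using i \<open>horder \<psi>1 = horder g\<close> k_def by simp
        have "\<bar>dpart is f (x + h) - dpart is f x\<bar> \<le> Sg * (g r * r powr (- real (horder g)))"
          using holder_pt[OF f pos iK h, of x] unfolding Sg_def r_def .
        also have "\<dots> \<le> Sg * ((\<delta>' * \<psi>1 r) * r powr (- real (horder g)))"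
          using gsmall[OF r(1) True] Sg0
          by (intro mult_left_mono mult_right_mono) auto
        also have "\<dots> = \<delta>' * Sg * D" unfolding D_def using \<open>horder \<psi>1 = horder g\<close> k_def by simp
        also have "\<dots> \<le> (\<delta>' * Sg + Ck * Nk) * D"
          using D0 Ck0 Nk0 by (simp add: distrib_right)
        finally show ?thesis .
      next
        case False
        have b1: "\<bar>dpart is f (x + h)\<bar> \<le> Nk" "\<bar>dpart is f x\<bar> \<le> Nk"
          using pt_bound[OF f i] True k_def unfolding Nk_def by auto
        have "r0 powr (\<beta> - real k) \<le> r powr (\<beta> - real k)"
          using False r0 \<beta>k k_def by (intro powr_mono2) auto
        also have "\<dots> \<le> C1 * D" unfolding D_def using P_lemma[OF C1(2) r, of "real k"] by simp
        finally have q: "r0 powr (\<beta> - real k) \<le> C1 * D" .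
        have rp: "0 < r0 powr (\<beta> - real k)" using r0 by simp
        have one: "1 \<le> C1 * D / r0 powr (\<beta> - real k)" using q rp by simp
        have "2 * Nk = 2 * Nk * 1" by simp
        also have "\<dots> \<le> 2 * Nk * (C1 * D / r0 powr (\<beta> - real k))"
          by (rule mult_left_mono[OF one]) (use Nk0 in simp)
        also have "\<dots> = Ck * Nk * D" unfolding Ck_def by (simp add: field_simps)
        also have "\<dots> \<le> (\<delta>' * Sg + Ck * Nk) * D" using D0 \<delta>' Sg0 by (simp add: distrib_right)
        finally show ?thesis using b1 by linarith
      qed
      then show "\<bar>dpart is f (x + h) - dpart is f x\<bar> / (\<psi>1 (norm h) * norm h powr (- real k)) \<le> \<delta>' * Sg + Ck * Nk"
        using D0 unfolding D_def r_def by (simp add: divide_le_eq)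
    qed
    have Sg_le: "Sg \<le> Cg_norm g f" unfolding Sg_def by (rule Cg_parts(2)[OF f pos])
    have G0: "0 \<le> Cg_norm g f" by (rule Cg_parts(3)[OF f pos])
    have "Ck * Nk \<le> Ck * (C0 * sup0 f + (\<delta>' / (Ck + 1)) * Cg_norm g f)"
      using C0(2)[OF f] Ck0 unfolding Nk_def by (simp add: mult_left_mono)
    also have "\<dots> = Ck * C0 * sup0 f + (Ck * \<delta>' / (Ck + 1)) * Cg_norm g f"
      by (simp add: algebra_simps)
    also have "(Ck * \<delta>' / (Ck + 1)) * Cg_norm g f \<le> \<delta>' * Cg_norm g f"
    proof (rule mult_right_mono[OF _ G0])
      show "Ck * \<delta>' / (Ck + 1) \<le> \<delta>'" using Ck0 \<delta>' by (simp add: divide_le_eq field_simps)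
    qed
    finally have a1: "Ck * Nk \<le> Ck * C0 * sup0 f + \<delta>' * Cg_norm g f" by simp
    have a2: "\<delta>' * Sg \<le> \<delta>' * Cg_norm g f" using Sg_le \<delta>' by (simp add: mult_left_mono)
    have "\<delta>' * Cg_norm g f + \<delta>' * Cg_norm g f = \<delta> * Cg_norm g f" unfolding \<delta>'_def by simp
    then show "holder_semiD (horder \<psi>1) \<psi>1 f \<le> Ck * C0 * sup0 f + \<delta> * Cg_norm g f"
      using main a1 a2 unfolding k_def by linarith
  qed
next
  case False
  then have kK': "horder \<psi>1 < horder g" using kK by simp
  define k where "k = horder \<psi>1"
  define d where "d = real (card (Basis :: (real^'n) set))"
  have d: "0 < d" unfolding d_def by (simp add: card_gt_0_iff)
  define \<delta>'' where "\<delta>'' = \<delta> / (d * C1)"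
  have \<delta>'': "0 < \<delta>''" unfolding \<delta>''_def using d C1 \<delta> by simp
  obtain C0 where C0: "0 \<le> C0" "\<And>f :: real^'n \<Rightarrow> real. in_Cg g f \<Longrightarrow> normD (Suc k) f \<le> C0 * sup0 f + \<delta>'' * Cg_norm g f"
    using SM[OF pos K2 c \<alpha>K, of "Suc k" \<delta>''] kK' \<delta>'' unfolding k_def by auto
  show ?thesis
  proof (intro exI[of _ "d * C1 * C0"] conjI allI impI)
    show "0 \<le> d * C1 * C0" using d C1 C0 by simp
    fix f :: "real^'n \<Rightarrow> real" assume f: "in_Cg g f"
    define N where "N = normD (Suc k) f"
    have N0: "0 \<le> N" unfolding N_def using normD_nonneg[OF f, of "Suc k"] kK' k_def by simp
    have main: "holder_semiD k \<psi>1 f \<le> d * C1 * N"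
    proof (rule hsD_le, rule hs_le)
      fix "is" :: "(real^'n) list" and x h :: "real^'n"
      assume i: "is \<in> multi_idx k" and h: "0 < norm h" "norm h \<le> 1"
      define r where "r = norm h"
      have r: "0 < r" "r \<le> 1" using h unfolding r_def by auto
      define D where "D = \<psi>1 r * r powr (- real k)"
      have D0: "0 < D" unfolding D_def using pos1[OF r] r by simp
      have "\<bar>dpart is f (x + h) - dpart is f x\<bar> \<le> d * r * N"
        using lip_level[OF f i, of x h] kK' k_def unfolding d_def r_def N_def by simp
      also have "r \<le> C1 * D"
      proof -
        have "r = r powr 1" using r by simp
        also have "\<dots> \<le> r powr (\<beta> - real k)" using r \<beta>k k_def by (intro powr_mono') auto
        also have "\<dots> \<le> C1 * D" unfolding D_def using P_lemma[OF C1(2) r, of "real k"] by simp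
        finally show ?thesis .
      qed
      then have "d * r * N \<le> d * (C1 * D) * N" using d N0 by (intro mult_right_mono mult_left_mono) auto
      finally have "\<bar>dpart is f (x + h) - dpart is f x\<bar> \<le> (d * C1 * N) * D" by (simp add: ac_simps)
      then show "\<bar>dpart is f (x + h) - dpart is f x\<bar> / (\<psi>1 (norm h) * norm h powr (- real k)) \<le> d * C1 * N"
        using D0 unfolding D_def r_def by (simp add: divide_le_eq)
    qed
    have "d * C1 * N \<le> d * C1 * (C0 * sup0 f + \<delta>'' * Cg_norm g f)"
      using C0(2)[OF f] d C1 unfolding N_def by (intro mult_left_mono) auto
    also have "\<dots> = d * C1 * C0 * sup0 f + \<delta> * Cg_norm g f"
      unfolding \<delta>''_def using d C1 by (simp add: field_simps)
    finally show "holder_semiD (horder \<psi>1) \<psi>1 f \<le> d * C1 * C0 * sup0 f + \<delta> * Cg_norm g f"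
      using main unfolding k_def by linarith
  qed
qed

theorem proposition2p6:
  fixes \<psi>1 \<psi>2 :: "real \<Rightarrow> real" and \<epsilon> :: real
  assumes pos1: "\<forall>r\<in>{0<..1}. 0 < \<psi>1 r" and pos2: "\<forall>r\<in>{0<..1}. 0 < \<psi>2 r"
    and one1: "\<psi>1 1 = 1" and one2: "\<psi>2 1 = 1"
    and lim1: "(\<psi>1 \<longlongrightarrow> 0) (at_right 0)" and lim2: "(\<psi>2 \<longlongrightarrow> 0) (at_right 0)"
    and I1: "index_interval \<psi>1 \<subseteq> {0<..<1} \<union> {1<..<2} \<union> {2<..<3}"
    and I2: "index_interval \<psi>2 \<subseteq> {0<..<1} \<union> {1<..<2} \<union> {2<..<3}"
    and Mm: "upper_index \<psi>1 < lower_index \<psi>2"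
    and eps: "0 < \<epsilon>" "\<epsilon> < 1"
  shows "\<exists>C>0. \<forall>f :: real^'n \<Rightarrow> real. in_Cg \<psi>2 f \<longrightarrow>
           Cg_norm \<psi>1 f \<le> C * sup0 f + \<epsilon> * Cg_norm \<psi>2 f"
proof -
  have p1: "\<And>r. 0 < r \<Longrightarrow> r \<le> 1 \<Longrightarrow> 0 < \<psi>1 r" using pos1 by auto
  have p2: "\<And>r. 0 < r \<Longrightarrow> r \<le> 1 \<Longrightarrow> 0 < \<psi>2 r" using pos2 by auto
  have le1: "lower_index \<psi>1 \<le> upper_index \<psi>1" by (rule lower_le_upper[OF p1])
  have le2: "lower_index \<psi>2 \<le> upper_index \<psi>2" by (rule lower_le_upper[OF p2])
  have M1ninf: "upper_index \<psi>1 \<noteq> -\<infinity>"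
  proof
    assume "upper_index \<psi>1 = -\<infinity>"
    then have "Inf (ereal ` {\<beta>. almost_decreasing (\<lambda>r. \<psi>1 r / r powr \<beta>)}) < ereal 0"
      by (simp add: upper_index_def)
    then obtain \<beta> where \<beta>: "almost_decreasing (\<lambda>r. \<psi>1 r / r powr \<beta>)" "\<beta> < 0"
      by (auto simp: Inf_less_iff)
    obtain C where C: "1 \<le> C" "\<forall>r. 0 < r \<and> r \<le> 1 \<longrightarrow> r powr \<beta> \<le> C * \<psi>1 r"
      using dec_bound[OF \<beta>(1) one1] by blast
    have lowb: "1 / C \<le> \<psi>1 r" if "0 < r" "r \<le> 1" for r
    proof -
      have "r powr 0 \<le> r powr \<beta>" using that \<beta>(2) by (intro powr_mono') auto
      then have "1 \<le> C * \<psi>1 r" using C(2) that by auto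
      then show ?thesis using C(1) by (simp add: field_simps)
    qed
    have "eventually (\<lambda>r. \<psi>1 r < 1 / C) (at_right 0)"
      using order_tendstoD(2)[OF lim1, of "1 / C"] C(1) by simp
    then obtain b where b: "b > 0" "\<forall>y>0. y < b \<longrightarrow> \<psi>1 y < 1 / C"
      by (auto simp: eventually_at_right_field)
    define y where "y = min (b / 2) 1"
    have y: "0 < y" "y < b" "y \<le> 1" using b unfolding y_def by auto
    then show False using b lowb[of y] by force
  qed
  have M1inf: "upper_index \<psi>1 \<noteq> \<infinity>" using Mm by auto
  obtain M1r where M1r: "upper_index \<psi>1 = ereal M1r"
    using M1ninf M1inf by (cases "upper_index \<psi>1") auto
  have m1ninf: "lower_index \<psi>1 \<noteq> -\<infinity>"
  proof
    assume a: "lower_index \<psi>1 = -\<infinity>"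
    define x where "x = min M1r 0 - 1"
    have "x \<in> index_interval \<psi>1" unfolding index_interval_def using a M1r x_def by auto
    then show False using I1 x_def by auto
  qed
  have m1inf: "lower_index \<psi>1 \<noteq> \<infinity>" using le1 M1r by auto
  obtain m1r where m1r: "lower_index \<psi>1 = ereal m1r"
    using m1ninf m1inf by (cases "lower_index \<psi>1") auto
  have mM1: "m1r \<le> M1r" using le1 m1r M1r by simp
  have "m1r \<in> index_interval \<psi>1" unfolding index_interval_def using m1r M1r mM1 by simp
  then have m1U: "0 < m1r" "m1r < 3" using I1 by auto
  define k where "k = horder \<psi>1"
  have c1: "1 \<le> \<lceil>m1r\<rceil>" using m1U by (simp add: le_ceiling_iff)
  have kdef: "real k = real_of_int \<lceil>m1r\<rceil> - 1"
    unfolding k_def horder_def m1r using c1 by simp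
  have M1ceil: "M1r < real_of_int \<lceil>m1r\<rceil>"
  proof (rule ccontr)
    assume "\<not> M1r < real_of_int \<lceil>m1r\<rceil>"
    then have "real_of_int \<lceil>m1r\<rceil> \<in> index_interval \<psi>1"
      unfolding index_interval_def using m1r M1r le_of_int_ceiling[of m1r] by auto
    then show False using I1 no_int_U by blast
  qed
  have km1: "real k < m1r" using kdef ceiling_correct[of m1r] by linarith
  have k2: "k \<le> 2"
  proof -
    have "\<lceil>m1r\<rceil> \<le> 3" using m1U by (simp add: ceiling_le_iff)
    then have "real k \<le> 2" using kdef by linarith
    then show ?thesis by simp
  qed
  have m2ninf: "lower_index \<psi>2 \<noteq> -\<infinity>" using Mm M1r by auto
  show ?thesis
  proof (cases "lower_index \<psi>2 = \<infinity>")
    case True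
    have "ereal 2 < Sup (ereal ` {\<alpha>. almost_increasing (\<lambda>r. \<psi>2 r / r powr \<alpha>)})"
      using True by (simp add: lower_index_def)
    then obtain \<alpha> where \<alpha>: "almost_increasing (\<lambda>r. \<psi>2 r / r powr \<alpha>)" "2 < \<alpha>"
      by (auto simp: less_Sup_iff)
    obtain c where c: "0 < c" "\<forall>r. 0 < r \<and> r \<le> 1 \<longrightarrow> c * \<psi>2 r \<le> r powr \<alpha>"
      using inc_bound[OF \<alpha>(1) one2] by blast
    have K0: "horder \<psi>2 = 0" unfolding horder_def True by simp
    show ?thesis
    proof (intro exI[of _ 1] conjI allI impI)
      fix f :: "real^'n \<Rightarrow> real" assume f: "in_Cg \<psi>2 f"
      define S where "S = holder_semiD 0 \<psi>2 f"
      have S0: "0 \<le> S" unfolding S_def using hsD_nonneg[OF f p2] K0 by simp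
      have nil: "[] \<in> (multi_idx (horder \<psi>2) :: (real^'n) list set)" using K0 by (simp add: multi_0)
      have tiny: "\<bar>f (x + h) - f x\<bar> \<le> (S / c) * norm h ^ 2" if h: "0 < norm h" "norm h \<le> 1" for x h
      proof -
        have "\<bar>f (x + h) - f x\<bar> \<le> S * \<psi>2 (norm h)"
          using holder_pt[OF f p2 nil h, of x] K0 h(1) unfolding S_def by (simp split: if_splits)
        also have "\<psi>2 (norm h) \<le> norm h ^ 2 / c"
        proof -
          have "c * \<psi>2 (norm h) \<le> norm h powr \<alpha>" using c(2) h by blast
          also have "\<dots> \<le> norm h powr 2" using h \<alpha>(2) by (intro powr_mono') auto
          also have "\<dots> = norm h ^ 2" using h by (simp add: powr_numeral)
          finally show ?thesis using c(1) by (simp add: field_simps)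
        qed
        then have "S * \<psi>2 (norm h) \<le> S * (norm h ^ 2 / c)" using S0 by (rule mult_left_mono)
        finally show ?thesis by simp
      qed
      have fc: "f y = f 0" for y
        by (rule const_of_tiny[of "S / c"]) (use S0 c(1) tiny in auto)
      then have fe: "f = (\<lambda>_. f 0)" by (rule ext)
      have "Cg_norm \<psi>1 f = \<bar>f 0\<bar>" "Cg_norm \<psi>2 f = \<bar>f 0\<bar>" "sup0 f = \<bar>f 0\<bar>"
        by (subst fe, rule Cg_norm_const)+ (subst fe, rule sup0_const)
      then show "Cg_norm \<psi>1 f \<le> 1 * sup0 f + \<epsilon> * Cg_norm \<psi>2 f" using eps by simp
    qed simp
  next
    case False
    obtain m2r where m2r: "lower_index \<psi>2 = ereal m2r"
      using m2ninf False by (cases "lower_index \<psi>2") auto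
    have M1m2: "M1r < m2r" using Mm M1r m2r by simp
    have "m2r \<in> index_interval \<psi>2" unfolding index_interval_def using m2r le2 by simp
    then have m2U: "0 < m2r" "m2r < 3" using I2 by auto
    define K where "K = horder \<psi>2"
    have c2: "1 \<le> \<lceil>m2r\<rceil>" using m2U by (simp add: le_ceiling_iff)
    have Kdef: "real K = real_of_int \<lceil>m2r\<rceil> - 1"
      unfolding K_def horder_def m2r using c2 by simp
    have Km2: "real K < m2r" using Kdef ceiling_correct[of m2r] by linarith
    have K2: "K \<le> 2"
    proof -
      have "\<lceil>m2r\<rceil> \<le> 3" using m2U by (simp add: ceiling_le_iff)
      then have "real K \<le> 2" using Kdef by linarith
      then show ?thesis by simp
    qed
    have kK: "k \<le> K"
    proof -
      have "real_of_int (int k) < m2r" using km1 mM1 M1m2 by simp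
      then have "int k < \<lceil>m2r\<rceil>" by (simp add: less_ceiling_iff)
      then have "real k \<le> real K" using Kdef by linarith
      then show ?thesis by simp
    qed
    have "upper_index \<psi>1 < ereal (min (real k + 1) m2r)"
      using M1r M1ceil M1m2 kdef by simp
    then have "\<exists>x\<in>ereal ` {\<beta>. almost_decreasing (\<lambda>r. \<psi>1 r / r powr \<beta>)}. x < ereal (min (real k + 1) m2r)"
      unfolding upper_index_def by (simp only: Inf_less_iff)
    then obtain \<beta> where \<beta>0: "almost_decreasing (\<lambda>r. \<psi>1 r / r powr \<beta>)" "ereal \<beta> < ereal (min (real k + 1) m2r)"
      by blast
    then have \<beta>: "almost_decreasing (\<lambda>r. \<psi>1 r / r powr \<beta>)" "\<beta> < real k + 1 \<and> \<beta> < m2r" by auto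
    have "upper_index \<psi>1 \<le> ereal \<beta>" unfolding upper_index_def using \<beta>(1) by (auto intro: Inf_lower)
    then have \<beta>M: "M1r \<le> \<beta>" using M1r by simp
    have "ereal (max \<beta> (real K)) < lower_index \<psi>2" using m2r \<beta>(2) Km2 by simp
    then obtain \<alpha> where \<alpha>: "almost_increasing (\<lambda>r. \<psi>2 r / r powr \<alpha>)" "max \<beta> (real K) < \<alpha>"
      unfolding lower_index_def by (auto simp: less_Sup_iff)
    obtain C1 where C1: "1 \<le> C1" "\<forall>r. 0 < r \<and> r \<le> 1 \<longrightarrow> r powr \<beta> \<le> C1 * \<psi>1 r"
      using dec_bound[OF \<beta>(1) one1] by blast
    obtain c where c: "0 < c" "\<forall>r. 0 < r \<and> r \<le> 1 \<longrightarrow> c * \<psi>2 r \<le> r powr \<alpha>"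
      using inc_bound[OF \<alpha>(1) one2] by blast
    have C1': "0 < C1" "\<And>r. 0 < r \<Longrightarrow> r \<le> 1 \<Longrightarrow> r powr \<beta> \<le> C1 * \<psi>1 r" using C1 by auto
    have c': "0 < c" "\<And>r. 0 < r \<Longrightarrow> r \<le> 1 \<Longrightarrow> c * \<psi>2 r \<le> r powr \<alpha>" using c by auto
    have K2': "horder \<psi>2 \<le> 2" using K2 K_def by simp
    have kK': "horder \<psi>1 \<le> horder \<psi>2" using kK k_def K_def by simp
    have \<beta>k: "real (horder \<psi>1) < \<beta>" "\<beta> \<le> real (horder \<psi>1) + 1"
      using \<beta>(2) \<beta>M mM1 km1 k_def by auto
    have \<alpha>\<beta>: "\<beta> < \<alpha>" and \<alpha>K: "real (horder \<psi>2) < \<alpha>" using \<alpha>(2) K_def by auto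
    define \<delta> where "\<delta> = \<epsilon> / (2 * (real k + 1))"
    have \<delta>: "0 < \<delta>" unfolding \<delta>_def using eps by simp
    have "\<forall>j\<in>{..k}. \<exists>C. 0 \<le> C \<and> (\<forall>f :: real^'n \<Rightarrow> real. in_Cg \<psi>2 f \<longrightarrow> normD j f \<le> C * sup0 f + \<delta> * Cg_norm \<psi>2 f)"
    proof
      fix j assume "j \<in> {..k}"
      then have "j \<le> horder \<psi>2" using kK K_def by simp
      then show "\<exists>C. 0 \<le> C \<and> (\<forall>f :: real^'n \<Rightarrow> real. in_Cg \<psi>2 f \<longrightarrow> normD j f \<le> C * sup0 f + \<delta> * Cg_norm \<psi>2 f)"
        using SM[OF p2 K2' c' \<alpha>K _ \<delta>] by blast
    qed
    then obtain Cf where Cf: "\<And>j. j \<in> {..k} \<Longrightarrow> 0 \<le> Cf j"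
      "\<And>j f. j \<in> {..k} \<Longrightarrow> in_Cg \<psi>2 (f :: real^'n \<Rightarrow> real) \<Longrightarrow> normD j f \<le> Cf j * sup0 f + \<delta> * Cg_norm \<psi>2 f"
      by (metis bchoice)
    obtain CH where CH: "0 \<le> CH" "\<And>f :: real^'n \<Rightarrow> real. in_Cg \<psi>2 f \<Longrightarrow>
           holder_semiD (horder \<psi>1) \<psi>1 f \<le> CH * sup0 f + (\<epsilon> / 2) * Cg_norm \<psi>2 f"
      using SH[OF p1 p2 K2' kK' C1' c' \<beta>k \<alpha>\<beta> \<alpha>K, of "\<epsilon> / 2"] eps by auto
    define C where "C = (\<Sum>j\<le>k. Cf j) + CH + 1"
    have sCf: "0 \<le> (\<Sum>j\<le>k. Cf j)" by (rule sum_nonneg) (rule Cf(1))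
    show ?thesis
    proof (intro exI[of _ C] conjI allI impI)
      show "0 < C" unfolding C_def using sCf CH by simp
      fix f :: "real^'n \<Rightarrow> real" assume f: "in_Cg \<psi>2 f"
      have s0: "0 \<le> sup0 f" by (rule sup0_nonneg[OF f])
      have "(\<Sum>j\<le>k. normD j f) \<le> (\<Sum>j\<le>k. Cf j * sup0 f + \<delta> * Cg_norm \<psi>2 f)"
        by (rule sum_mono) (rule Cf(2)[OF _ f])
      also have "\<dots> = (\<Sum>j\<le>k. Cf j) * sup0 f + (real k + 1) * \<delta> * Cg_norm \<psi>2 f"
        by (simp add: sum.distrib sum_distrib_right)
      also have "(real k + 1) * \<delta> = \<epsilon> / 2"
      proof -
        have "0 < real k + 1" by simp
        then show ?thesis unfolding \<delta>_def by (simp add: field_simps)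
      qed
      finally have a1: "(\<Sum>j\<le>k. normD j f) \<le> (\<Sum>j\<le>k. Cf j) * sup0 f + \<epsilon> / 2 * Cg_norm \<psi>2 f" .
      have a2: "holder_semiD k \<psi>1 f \<le> CH * sup0 f + (\<epsilon> / 2) * Cg_norm \<psi>2 f"
        using CH(2)[OF f] k_def by simp
      have a3: "Cg_norm \<psi>1 f = (\<Sum>j\<le>k. normD j f) + holder_semiD k \<psi>1 f"
        unfolding Cg_norm_def k_def ..
      have a4: "((\<Sum>j\<le>k. Cf j) + CH) * sup0 f \<le> C * sup0 f"
        unfolding C_def using s0 by (intro mult_right_mono) auto
      have "Cg_norm \<psi>1 f \<le> ((\<Sum>j\<le>k. Cf j) + CH) * sup0 f + \<epsilon> * Cg_norm \<psi>2 f"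
        using a1 a2 a3 by (simp add: algebra_simps)
      then show "Cg_norm \<psi>1 f \<le> C * sup0 f + \<epsilon> * Cg_norm \<psi>2 f" using a4 by linarith
    qed
  qed
qed

end
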